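(* Let $\tau$ be real, and let $a,b,s$ be integers with $a\leq 0$, $b\leq 0$ and $s>1$. If $s$ and $b$ have the same parity, then $$\psi^{a,b}_s(\tau)=\sum_{n=1}^{\infty}\frac{\sec^a(\pi n\tau)\csc^b(\pi n\tau)}{n^s}=\pi^s f(\tau),$$ where $f$ is a piecewise polynomial function of $\tau$ with rational coefficients on each piece. *)

theory Defs
  imports Complex_Main "HOL-Computational_Algebra.Polynomial"
begin

definition sec :: "real \<Rightarrow> real" where "sec x = 1 / cos x"
definition csc :: "real \<Rightarrow> real" where "csc x = 1 / sin x"

definition psi :: "int \<Rightarrow> int \<Rightarrow> int \<Rightarrow> real \<Rightarrow> real" where
  "psi a b s \<tau> = (\<Sum>m. let n = real (Suc m) in
      (sec (pi * n * \<tau>)) powi a * (csc (pi * n * \<tau>)) powi b / (n powi s))"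

definition piecewise_rat_poly :: "(real \<Rightarrow> real) \<Rightarrow> bool" where
  "piecewise_rat_poly f \<longleftrightarrow>
     (\<forall>u v. u \<le> v \<longrightarrow>
        (\<exists>xs :: real list. xs \<noteq> [] \<and> sorted xs \<and> hd xs = u \<and> last xs = v \<and>
           (\<forall>i < length xs - 1. \<exists>p :: real poly. (\<forall>j. coeff p j \<in> \<rat>) \<and>
              (\<forall>x \<in> {xs ! i .. xs ! Suc i}. f x = poly p x))))"

end

theory Submission
  imports Defs "HOL-Analysis.Analysis"
begin

lemma geo_cos_sums:
  fixes r t :: real assumes "0 \<le> r" "r < 1"
  shows "(\<lambda>n. r^(Suc n) * cos (real (Suc n) * t)) sums ((r * cos t - r^2) / (1 - 2*r * cos t + r^2))"
proof -
  define z where "z = complex_of_real r * cis t"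
  have nz: "norm z < 1" using assms by (simp add: z_def norm_mult)
  have "(\<lambda>n. z^n) sums (1/(1-z))" using geometric_sums[OF nz] .
  hence "(\<lambda>n. z * z^n) sums (z * (1/(1-z)))" by (rule sums_mult)
  hence "(\<lambda>n. Re (z^(Suc n))) sums Re (z/(1-z))" by (intro sums_Re) simp
  moreover have "Re (z^(Suc n)) = r^(Suc n) * cos (real (Suc n) * t)" for n
  proof -
    have zpow: "z^m = complex_of_real (r^m) * cis (real m * t)" for m
      by (simp add: z_def power_mult_distrib Complex.DeMoivre)
    show ?thesis unfolding zpow by simp
  qed
  moreover have "Re (z/(1-z)) = (r * cos t - r^2) / (1 - 2*r * cos t + r^2)"
  proof -
    have "Re (z/(1-z)) = (Re z * Re (1-z) + Im z * Im (1-z)) / ((Re (1-z))^2 + (Im (1-z))^2)" by (rule Re_divide)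
    also have "... = (r * cos t*(1 - r * cos t) - r * sin t * (r * sin t))/((1 - r * cos t)^2 + (r * sin t)^2)"
      by (simp add: z_def)
    also have "r * cos t*(1 - r * cos t) - r * sin t * (r * sin t) = r * cos t - r^2 * (sin t ^2 + cos t^2)"
      by (simp only: algebra_simps power2_eq_square)
    also have "(1 - r * cos t)^2 + (r * sin t)^2 = 1 - 2*r * cos t + r^2 * (sin t ^2 + cos t^2)"
      by (simp only: algebra_simps power2_eq_square)
    finally show ?thesis by simp
  qed
  ultimately show ?thesis by simp
qed

lemma summable_rpow_Suc: fixes r :: real assumes "0 \<le> r" "r < 1"
  shows "summable (\<lambda>n. r^(Suc n))"
proof -
  have "summable (\<lambda>n. r * r^n)" using assms by (intro summable_mult summable_geometric) simp
  thus ?thesis by simp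
qed

definition Br :: "real \<Rightarrow> real \<Rightarrow> real" where
  "Br r t = (\<Sum>n. r^(Suc n) * sin (real (Suc n) * t) / real (Suc n))"
definition Ar :: "real \<Rightarrow> real \<Rightarrow> real" where
  "Ar r t = (\<Sum>n. r^(Suc n) * cos (real (Suc n) * t) / real (Suc n)^2)"

lemma Br_deriv: fixes r :: real assumes "0 \<le> r" "r < 1"
  shows "(Br r has_field_derivative ((r * cos t - r^2) / (1 - 2*r * cos t + r^2))) (at t)"
proof -
  have "((\<lambda>x. \<Sum>n. r^(Suc n) * sin (real (Suc n) * x) / real (Suc n)) has_field_derivative
        (\<Sum>n. r^(Suc n) * cos (real (Suc n) * t))) (at t)"
  proof (rule has_field_derivative_series'(2)[where S=UNIV and x=t and ?x0.0=0 and
     f="\<lambda>n x. r^(Suc n) * sin (real (Suc n) * x) / real (Suc n)" and f'="\<lambda>n x. r^(Suc n) * cos (real (Suc n) * x)"])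
    show "uniformly_convergent_on UNIV (\<lambda>n x. \<Sum>i<n. r^(Suc i) * cos (real (Suc i) * x))"
      by (rule Weierstrass_m_test'[where M="\<lambda>n. r^(Suc n)"])
         (use assms summable_rpow_Suc[OF assms] in \<open>auto simp: abs_mult intro!: mult_left_le\<close>)
    fix n :: nat and x :: real
    show "((\<lambda>x. r^(Suc n) * sin (real (Suc n) * x) / real (Suc n)) has_field_derivative
          r^(Suc n) * cos (real (Suc n) * x)) (at x within UNIV)"
      by (auto intro!: derivative_eq_intros simp del: of_nat_Suc)
  qed auto
  thus ?thesis using sums_unique[OF geo_cos_sums[OF assms, of t]] unfolding Br_def[abs_def] by simp
qed

lemma Ar_deriv: fixes r :: real assumes "0 \<le> r" "r < 1"
  shows "(Ar r has_field_derivative (- Br r t)) (at t)"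
proof -
  have "((\<lambda>x. \<Sum>n. r^(Suc n) * cos (real (Suc n) * x) / real (Suc n)^2) has_field_derivative
        (\<Sum>n. - (r^(Suc n) * sin (real (Suc n) * t) / real (Suc n)))) (at t)"
  proof (rule has_field_derivative_series'(2)[where S=UNIV and x=t and ?x0.0=0 and
     f="\<lambda>n x. r^(Suc n) * cos (real (Suc n) * x) / real (Suc n)^2" and 
     f'="\<lambda>n x. - (r^(Suc n) * sin (real (Suc n) * x) / real (Suc n))"])
    have "\<bar>r ^ Suc n * sin (real (Suc n) * x) / real (Suc n)\<bar> \<le> r^(Suc n)" for n x
    proof -
      have "\<bar>r ^ Suc n * sin (real (Suc n) * x) / real (Suc n)\<bar> = r^Suc n * \<bar>sin (real (Suc n) * x)\<bar> / real (Suc n)"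
        using assms by (simp add: abs_mult)
      also have "\<dots> \<le> r^Suc n * 1 / 1"
        using assms by (intro frac_le mult_left_mono) auto
      finally show ?thesis by simp
    qed
    thus "uniformly_convergent_on UNIV (\<lambda>n x. \<Sum>i<n. - (r^(Suc i) * sin (real (Suc i) * x) / real (Suc i)))"
      by (intro Weierstrass_m_test'[where M="\<lambda>n. r^(Suc n)"]) (use summable_rpow_Suc[OF assms] in auto)
    fix n :: nat and x :: real
    show "((\<lambda>x. r^(Suc n) * cos (real (Suc n) * x) / real (Suc n)^2) has_field_derivative
          - (r^(Suc n) * sin (real (Suc n) * x) / real (Suc n))) (at x within UNIV)"
      by (auto intro!: derivative_eq_intros simp: power2_eq_square field_simps simp del: of_nat_Suc)
    have "summable (\<lambda>n. r ^ Suc n * cos (real (Suc n) * 0) / (real (Suc n))\<^sup>2)"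
    proof (rule summable_comparison_test[OF _ summable_rpow_Suc[OF assms]])
      show "\<exists>N. \<forall>n\<ge>N. norm (r ^ Suc n * cos (real (Suc n) * 0) / (real (Suc n))\<^sup>2) \<le> r ^ Suc n"
      proof (intro exI allI impI)
        fix n :: nat
        have "r ^ Suc n / (real (Suc n))\<^sup>2 \<le> r ^ Suc n / 1"
          using assms by (intro divide_left_mono) auto
        thus "norm (r ^ Suc n * cos (real (Suc n) * 0) / (real (Suc n))\<^sup>2) \<le> r ^ Suc n" using assms by simp
      qed
    qed
    thus "summable (\<lambda>n. r ^ Suc n * cos (real (Suc n) * 0) / (real (Suc n))\<^sup>2)" .
  qed auto
  moreover have "summable (\<lambda>n. r^(Suc n) * sin (real (Suc n) * t) / real (Suc n))"
  proof (rule summable_comparison_test[OF _ summable_rpow_Suc[OF assms]])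
    show "\<exists>N. \<forall>n\<ge>N. norm (r ^ Suc n * sin (real (Suc n) * t) / real (Suc n)) \<le> r ^ Suc n"
    proof (intro exI allI impI)
      fix n :: nat
      have "\<bar>r ^ Suc n * sin (real (Suc n) * t) / real (Suc n)\<bar> = r^Suc n * \<bar>sin (real (Suc n) * t)\<bar> / real (Suc n)"
        using assms by (simp add: abs_mult)
      also have "\<dots> \<le> r^Suc n * 1 / 1"
        using assms by (intro frac_le mult_left_mono) auto
      finally show "norm (r ^ Suc n * sin (real (Suc n) * t) / real (Suc n)) \<le> r ^ Suc n" by simp
    qed
  qed
  ultimately show ?thesis unfolding Ar_def[abs_def] Br_def by (simp add: suminf_minus)
qed

lemma Br_eq: fixes r :: real assumes "0 \<le> r" "r < 1"
  shows "Br r t = arctan (r * sin t / (1 - r * cos t))"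
proof -
  have dpos: "1 - r * cos x > 0" for x
  proof -
    have "r * cos x \<le> r * 1" using assms by (intro mult_left_mono) auto
    thus ?thesis using assms by simp
  qed
  have "DERIV (\<lambda>x. arctan (r * sin x / (1 - r * cos x))) x :> ((r * cos x - r^2) / (1 - 2*r*cos x + r^2))" for x
  proof -
    define c s d where "c = cos x" and "s = sin x" and "d = 1 - r * c"
    have d: "d > 0" using dpos[of x] by (simp add: d_def c_def)
    have sc: "s^2 + c^2 = 1" by (simp add: s_def c_def)
    have D: "1 + (r * s / d)^2 = (1 - 2*r*c + r^2) / d^2"
    proof -
      have "1 + (r * s / d)^2 = (d^2 + r^2 * s^2) / d^2" using d by (simp add: field_simps power2_eq_square)
      also have "d^2 + r^2 * s^2 = 1 - 2*r*c + r^2 * (s^2 + c^2)" by (simp add: d_def algebra_simps power2_eq_square)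
      also have "\<dots> = 1 - 2*r*c + r^2" unfolding sc by simp
      finally show ?thesis .
    qed
    have Dpos: "1 - 2*r*c + r^2 > 0"
    proof -
      have "1 - 2*r*c + r^2 = 1 - 2*r*c + r^2 * (s^2 + c^2)" unfolding sc by simp
      also have "\<dots> = d^2 + r^2 * s^2" by (simp add: d_def algebra_simps power2_eq_square)
      finally have "1 - 2*r*c + r^2 = d^2 + r^2 * s^2" .
      thus ?thesis using d by (simp add: add_pos_nonneg)
    qed
    have q: "DERIV (\<lambda>x. r * sin x / (1 - r * cos x)) x :> (r * c * d - r * s * (r * s))/d^2"
      unfolding c_def s_def d_def
      by (rule DERIV_cong[OF DERIV_quotient], (rule derivative_eq_intros refl)+, use dpos[of x] in simp,
          simp add: power2_eq_square algebra_simps)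
    have num: "r * c * d - r * s * (r * s) = r*c - r^2"
    proof -
      have "r * c * d - r * s * (r * s) = r * c - r^2 * (s^2+c^2)" by (simp add: d_def algebra_simps power2_eq_square)
      thus ?thesis unfolding sc by simp
    qed
    show ?thesis
    proof (rule DERIV_cong[OF DERIV_chain2[OF DERIV_arctan q]])
      show "inverse (1 + (r * sin x / (1 - r * cos x))\<^sup>2) * ((r * c * d - r * s * (r * s)) / d\<^sup>2) =
            (r * cos x - r\<^sup>2) / (1 - 2 * r * cos x + r\<^sup>2)"
      proof -
        have "inverse (1 + (r * sin x / (1 - r * cos x))\<^sup>2) * ((r * c * d - r * s * (r * s)) / d\<^sup>2)
          = inverse ((1 - 2*r*c + r^2) / d^2) * ((r * c - r^2) / d^2)"
          unfolding c_def[symmetric] s_def[symmetric] d_def[symmetric] by (simp only: D num)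
        also have "\<dots> = (r * c - r^2) / (1 - 2*r*c + r^2)"
          using d Dpos by (simp add: inverse_divide)
        finally show ?thesis by (simp add: c_def)
      qed
    qed
  qed
  note at = this
  have "\<forall>x. DERIV (\<lambda>x. Br r x - arctan (r * sin x / (1 - r * cos x))) x :> 0"
    using DERIV_diff[OF Br_deriv[OF assms] at] by simp
  from DERIV_isconst_all[OF this, of t 0] show ?thesis by (simp add: Br_def)
qed

lemma summable_inv_sq: "summable (\<lambda>n. 1 / real (Suc n)^2)"
  using sums_summable[OF inverse_squares_sums] by simp

lemma Ar_cont: "continuous_on {0..1} (\<lambda>r. Ar r t)"
proof -
  have "uniform_limit {0..1} (\<lambda>n r. \<Sum>i<n. r^(Suc i) * cos (real (Suc i) * t) / real (Suc i)^2)
          (\<lambda>r. \<Sum>i. r^(Suc i) * cos (real (Suc i) * t) / real (Suc i)^2) sequentially"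
  proof (rule Weierstrass_m_test[OF _ summable_inv_sq])
    fix n :: nat and r :: real assume r: "r \<in> {0..1}"
    have p1: "r^(Suc n) \<le> 1" using r by (intro power_le_one) auto
    have p0: "0 \<le> r^(Suc n)" using r by simp
    have "\<bar>r^(Suc n) * cos (real (Suc n) * t)\<bar> \<le> 1 * 1"
      unfolding abs_mult using p0 p1 by (intro mult_mono) (auto simp: abs_cos_le_one)
    hence "\<bar>r^(Suc n) * cos (real (Suc n) * t)\<bar> / real (Suc n)^2 \<le> 1 / real (Suc n)^2"
      by (intro divide_right_mono) auto
    thus "norm (r^(Suc n) * cos (real (Suc n) * t) / real (Suc n)^2) \<le> 1 / real (Suc n)^2"
      by (simp add: abs_divide)
  qed
  note ul = this
  have c: "\<forall>n. continuous_on {0..1} (\<lambda>r. \<Sum>i<n. r^(Suc i) * cos (real (Suc i) * t) / real (Suc i)^2)"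
    by (intro allI continuous_intros) (simp del: of_nat_Suc)
  show ?thesis unfolding Ar_def
    by (rule uniform_limit_theorem[OF always_eventually[OF c] ul trivial_limit_sequentially])
qed

definition Cf :: "nat \<Rightarrow> real \<Rightarrow> real" where
  "Cf S t = (\<Sum>n. cos (real (Suc n) * t) / real (Suc n)^S)"
definition Sf :: "nat \<Rightarrow> real \<Rightarrow> real" where
  "Sf S t = (\<Sum>n. sin (real (Suc n) * t) / real (Suc n)^S)"

lemma Ar_one: "Ar 1 t = Cf 2 t" by (simp add: Ar_def Cf_def)

lemma Ar_FTC: fixes r \<theta> :: real assumes "0 \<le> r" "r < 1" "0 \<le> \<theta>"
  shows "((\<lambda>t. - arctan (r * sin t / (1 - r * cos t))) has_integral (Ar r \<theta> - Ar r 0)) {0..\<theta>}"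
proof (rule fundamental_theorem_of_calculus[OF assms(3)])
  fix x assume "x \<in> {0..\<theta>}"
  show "(Ar r has_vector_derivative - arctan (r * sin x / (1 - r * cos x))) (at x within {0..\<theta>})"
    using Ar_deriv[OF assms(1,2), of x] Br_eq[OF assms(1,2), of x]
    by (simp add: has_real_derivative_iff_has_vector_derivative[symmetric] has_field_derivative_at_within)
qed

lemma arctan_half: fixes t :: real assumes "0 < t" "t < 2*pi"
  shows "arctan (sin t / (1 - cos t)) = (pi - t) / 2"
proof -
  define y where "y = t / 2"
  have t: "t = 2 * y" by (simp add: y_def)
  have sy: "sin y > 0" using assms by (intro sin_gt_zero) (auto simp: y_def)
  have "sin t / (1 - cos t) = cos y / sin y"
    unfolding t sin_double cos_double_sin using sy by (simp add: field_simps power2_eq_square)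
  also have "\<dots> = tan ((pi - t) / 2)"
  proof -
    have e: "(pi - t) / 2 = pi/2 - y" by (simp add: t field_simps)
    show ?thesis unfolding e tan_def using sin_cos_eq[of "pi/2 - y"] cos_sin_eq[of "pi/2 - y"] by simp
  qed
  finally show ?thesis using assms by (simp add: arctan_tan)
qed

lemma cos_lt_one_open: fixes x :: real assumes "0 < x" "x < 2*pi" shows "cos x < 1"
proof -
  have "sin (x/2) > 0" using assms by (intro sin_gt_zero) auto
  moreover have "cos x = 1 - 2 * sin (x/2)^2" using cos_double_sin[of "x/2"] by simp
  ultimately show ?thesis by simp
qed

lemma Cf2_0: "Cf 2 0 = pi^2/6"
  using sums_unique[OF inverse_squares_sums] by (simp add: Cf_def add.commute)

theorem Cf2: fixes \<theta> :: real assumes th: "0 \<le> \<theta>" "\<theta> \<le> 2*pi"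
  shows "Cf 2 \<theta> = pi^2/6 - pi*\<theta>/2 + \<theta>^2/4"
proof -
  define rk where "rk k = 1 - inverse (real (Suc k))" for k
  have rk0: "0 \<le> rk k" for k by (simp add: rk_def field_simps)
  have rk1: "rk k < 1" for k by (simp add: rk_def)
  have rklim: "rk \<longlonglongrightarrow> 1" unfolding rk_def using LIMSEQ_inverse_real_of_nat_add_minus[of 1] by simp
  define F where "F k t = - arctan (rk k * sin t / (1 - rk k * cos t))" for k t
  define g where "g t = (if t = 0 \<or> t = 2*pi then 0 else -(pi - t)/2)" for t
  have int: "(F k has_integral (Ar (rk k) \<theta> - Ar (rk k) 0)) {0..\<theta>}" for k
    unfolding F_def by (rule Ar_FTC[OF rk0 rk1 th(1)])
  have dc: "(\<lambda>k. integral {0..\<theta>} (F k)) \<longlonglongrightarrow> integral {0..\<theta>} g"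
  proof (rule dominated_convergence(2)[where h="\<lambda>_. pi/2"])
    show "F k integrable_on {0..\<theta>}" for k using int by blast
    show "(\<lambda>_. pi/2) integrable_on {0..\<theta>}" by (intro integrable_continuous_real continuous_intros)
    show "norm (F k x) \<le> pi/2" for k x
    proof -
      have "\<bar>arctan (rk k * sin x / (1 - rk k * cos x))\<bar> < pi/2"
        using arctan_bounded[of "rk k * sin x / (1 - rk k * cos x)"] unfolding abs_less_iff by linarith
      thus ?thesis unfolding F_def by simp
    qed
    fix x assume x: "x \<in> {0..\<theta>}"
    show "(\<lambda>k. F k x) \<longlonglongrightarrow> g x"
    proof (cases "x = 0 \<or> x = 2*pi")
      case True
      hence "sin x = 0" by auto
      thus ?thesis using True by (simp add: F_def g_def)
    next
      case False
      hence x0: "0 < x" "x < 2*pi" using x th by auto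
      have c1: "1 - 1 * cos x \<noteq> 0" using cos_lt_one_open[OF x0] by simp
      have "(\<lambda>k. F k x) \<longlonglongrightarrow> - arctan (1 * sin x / (1 - 1 * cos x))"
        unfolding F_def by (intro tendsto_intros rklim c1)
      also have "- arctan (1 * sin x / (1 - 1 * cos x)) = g x"
        using False arctan_half[OF x0] by (simp add: g_def)
      finally show ?thesis .
    qed
  qed
  have lim2: "(\<lambda>k. integral {0..\<theta>} (F k)) \<longlonglongrightarrow> Cf 2 \<theta> - Cf 2 0"
  proof -
    have "(\<lambda>k. Ar (rk k) s) \<longlonglongrightarrow> Ar 1 s" for s
      by (rule continuous_on_tendsto_compose[OF Ar_cont rklim])
         (use rk0 rk1 in \<open>auto intro!: always_eventually less_imp_le\<close>)
    hence "(\<lambda>k. Ar (rk k) \<theta> - Ar (rk k) 0) \<longlonglongrightarrow> Ar 1 \<theta> - Ar 1 0" by (intro tendsto_intros)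
    moreover have "integral {0..\<theta>} (F k) = Ar (rk k) \<theta> - Ar (rk k) 0" for k using int[of k] by (rule integral_unique)
    ultimately show ?thesis by (simp add: Ar_one)
  qed
  have "integral {0..\<theta>} g = Cf 2 \<theta> - Cf 2 0" using LIMSEQ_unique[OF dc lim2] .
  moreover have "integral {0..\<theta>} g = integral {0..\<theta>} (\<lambda>t. -(pi - t)/2)"
    by (rule integral_spike[where S="{0, 2*pi}"]) (auto simp: g_def)
  moreover have "((\<lambda>t. -(pi - t)/2) has_integral (-(pi*\<theta>/2 - \<theta>^2/4))) {0..\<theta>}"
  proof -
    have "((\<lambda>t. -(pi - t)/2) has_integral ((\<lambda>t. -(pi*t/2 - t^2/4)) \<theta> - (\<lambda>t. -(pi*t/2 - t^2/4)) 0)) {0..\<theta>}"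
      by (rule fundamental_theorem_of_calculus[OF th(1)])
         (auto intro!: derivative_eq_intros simp: has_real_derivative_iff_has_vector_derivative[symmetric] field_simps)
    thus ?thesis by simp
  qed
  ultimately have "Cf 2 \<theta> - Cf 2 0 = -(pi*\<theta>/2 - \<theta>^2/4)" by (metis integral_unique)
  thus ?thesis using Cf2_0 by simp
qed

definition ratpoly :: "real poly \<Rightarrow> bool" where "ratpoly p \<longleftrightarrow> (\<forall>j. coeff p j \<in> \<rat>)"

lemma ratpoly_const: "c \<in> \<rat> \<Longrightarrow> ratpoly [:c:]"
  by (auto simp: ratpoly_def coeff_pCons')

lemma ratpoly_pCons: "c \<in> \<rat> \<Longrightarrow> ratpoly p \<Longrightarrow> ratpoly (pCons c p)"
  by (auto simp: ratpoly_def coeff_pCons')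

lemma ratpoly_add: "ratpoly p \<Longrightarrow> ratpoly q \<Longrightarrow> ratpoly (p + q)"
  by (auto simp: ratpoly_def)

lemma ratpoly_diff: "ratpoly p \<Longrightarrow> ratpoly q \<Longrightarrow> ratpoly (p - q)"
  by (auto simp: ratpoly_def)

lemma ratpoly_smult: "c \<in> \<rat> \<Longrightarrow> ratpoly p \<Longrightarrow> ratpoly (smult c p)"
  by (auto simp: ratpoly_def)

lemma ratpoly_mult: "ratpoly p \<Longrightarrow> ratpoly q \<Longrightarrow> ratpoly (p * q)"
  unfolding ratpoly_def coeff_mult by (auto intro!: Rats_sum)

lemma ratpoly_pcompose: "ratpoly p \<Longrightarrow> ratpoly q \<Longrightarrow> ratpoly (pcompose p q)"
proof (induction p)
  case 0 thus ?case by (simp add: ratpoly_def)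
next
  case (pCons a p)
  have "ratpoly p" unfolding ratpoly_def
  proof
    fix j show "coeff p j \<in> \<rat>" using pCons.prems(1)[unfolded ratpoly_def, rule_format, of "Suc j"] by simp
  qed
  moreover have "a \<in> \<rat>" using pCons.prems(1)[unfolded ratpoly_def, rule_format, of 0] by simp
  ultimately show ?case unfolding pcompose_pCons
    using pCons by (intro ratpoly_add ratpoly_const ratpoly_mult) auto
qed

lemma ratpoly_poly: "ratpoly p \<Longrightarrow> x \<in> \<rat> \<Longrightarrow> poly p x \<in> \<rat>"
  unfolding poly_altdef ratpoly_def by (auto intro!: Rats_sum)

definition anti :: "real poly \<Rightarrow> real poly" where
  "anti p = (\<Sum>j\<le>degree p. monom (coeff p j / real (Suc j)) (Suc j))"

lemma coeff_anti: "coeff (anti p) k = (if k = 0 then 0 else coeff p (k - 1) / real k)"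
proof (cases k)
  case 0 thus ?thesis by (simp add: anti_def coeff_sum)
next
  case (Suc n)
  have "coeff (anti p) k = (\<Sum>j\<le>degree p. if j = n then coeff p j / real (Suc j) else 0)"
    unfolding anti_def coeff_sum Suc by (intro sum.cong) auto
  also have "\<dots> = (if n \<le> degree p then coeff p n / real (Suc n) else 0)"
    by (simp add: sum.delta')
  also have "\<dots> = coeff p n / real (Suc n)"
    using coeff_eq_0[of p n] by auto
  finally show ?thesis using Suc by simp
qed

lemma pderiv_anti: "pderiv (anti p) = p"
  by (rule poly_eqI) (simp add: coeff_pderiv coeff_anti del: of_nat_Suc)

lemma anti_0: "poly (anti p) 0 = 0"
  by (simp add: anti_def poly_sum poly_monom)

lemma ratpoly_anti: "ratpoly p \<Longrightarrow> ratpoly (anti p)"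
  by (auto simp: ratpoly_def coeff_anti)

lemma summable_inv_pow: assumes "2 \<le> S" shows "summable (\<lambda>n. 1 / real (Suc n)^S)"
proof (rule summable_comparison_test[OF _ summable_inv_sq])
  show "\<exists>N. \<forall>n\<ge>N. norm (1 / real (Suc n)^S) \<le> 1 / real (Suc n)^2"
  proof (intro exI allI impI)
    fix n :: nat
    have "real (Suc n)^2 \<le> real (Suc n)^S" using assms by (intro power_increasing) auto
    hence "1 / real (Suc n)^S \<le> 1 / real (Suc n)^2"
      by (intro divide_left_mono) auto
    thus "norm (1 / real (Suc n)^S) \<le> 1 / real (Suc n)^2" by simp
  qed
qed

lemma bound_cos: "norm (cos y / real (Suc n)^S) \<le> 1 / real (Suc n)^S"
  by (simp add: abs_divide divide_right_mono abs_cos_le_one del: of_nat_Suc)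

lemma bound_sin: "norm (sin y / real (Suc n)^S) \<le> 1 / real (Suc n)^S"
  by (simp add: abs_divide divide_right_mono abs_sin_le_one del: of_nat_Suc)

lemma Sf_deriv: assumes "2 \<le> S" shows "(Sf (Suc S) has_field_derivative Cf S x) (at x)"
proof -
  have "((\<lambda>x. \<Sum>n. sin (real (Suc n) * x) / real (Suc n)^(Suc S)) has_field_derivative
        (\<Sum>n. cos (real (Suc n) * x) / real (Suc n)^S)) (at x)"
  proof (rule has_field_derivative_series'(2)[where S=UNIV and x=x and ?x0.0=0 and
     f="\<lambda>n x. sin (real (Suc n) * x) / real (Suc n)^(Suc S)" and 
     f'="\<lambda>n x. cos (real (Suc n) * x) / real (Suc n)^S"])
    show "uniformly_convergent_on UNIV (\<lambda>n x. \<Sum>i<n. cos (real (Suc i) * x) / real (Suc i)^S)"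
      by (intro Weierstrass_m_test'[OF _ summable_inv_pow[OF assms]] bound_cos)
    fix n :: nat and x :: real
    show "((\<lambda>x. sin (real (Suc n) * x) / real (Suc n)^(Suc S)) has_field_derivative
          cos (real (Suc n) * x) / real (Suc n)^S) (at x within UNIV)"
      by (auto intro!: derivative_eq_intros simp: field_simps simp del: of_nat_Suc)
  qed auto
  thus ?thesis unfolding Sf_def[abs_def] Cf_def by simp
qed

lemma Cf_deriv: assumes "2 \<le> S" shows "(Cf (Suc S) has_field_derivative - Sf S x) (at x)"
proof -
  have "((\<lambda>x. \<Sum>n. cos (real (Suc n) * x) / real (Suc n)^(Suc S)) has_field_derivative
        (\<Sum>n. - (sin (real (Suc n) * x) / real (Suc n)^S))) (at x)"
  proof (rule has_field_derivative_series'(2)[where S=UNIV and x=x and ?x0.0=0 and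
     f="\<lambda>n x. cos (real (Suc n) * x) / real (Suc n)^(Suc S)" and 
     f'="\<lambda>n x. - (sin (real (Suc n) * x) / real (Suc n)^S)"])
    show "uniformly_convergent_on UNIV (\<lambda>n x. \<Sum>i<n. - (sin (real (Suc i) * x) / real (Suc i)^S))"
      by (intro Weierstrass_m_test'[OF _ summable_inv_pow[OF assms]]) (use bound_sin in simp)
    show "summable (\<lambda>n. cos (real (Suc n) * 0) / real (Suc n)^(Suc S))"
      using summable_inv_pow[of "Suc S"] assms by simp
    fix n :: nat and x :: real
    show "((\<lambda>x. cos (real (Suc n) * x) / real (Suc n)^(Suc S)) has_field_derivative
          - (sin (real (Suc n) * x) / real (Suc n)^S)) (at x within UNIV)"
      by (auto intro!: derivative_eq_intros simp: field_simps simp del: of_nat_Suc)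
  qed auto
  moreover have "summable (\<lambda>n. sin (real (Suc n) * x) / real (Suc n)^S)"
    by (rule summable_comparison_test[OF _ summable_inv_pow[OF assms]]) (use bound_sin in blast)
  ultimately show ?thesis unfolding Sf_def Cf_def[abs_def] by (simp add: suminf_minus)
qed

lemma Cf_pi: assumes "2 \<le> S" shows "Cf S pi + Cf S 0 = 2 * Cf S 0 / 2^S"
proof -
  define a where "a n = 1 / real (Suc n)^S" for n
  define b where "b n = cos (real (Suc n) * pi) / real (Suc n)^S" for n
  have sa: "a sums Cf S 0" unfolding a_def Cf_def using summable_inv_pow[OF assms] by (simp add: summable_sums)
  have sb: "b sums Cf S pi" unfolding b_def Cf_def
    by (rule summable_sums, rule summable_comparison_test[OF _ summable_inv_pow[OF assms]]) (use bound_cos in blast)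
  have "(\<lambda>n. a n + b n) sums (Cf S 0 + Cf S pi)" by (rule sums_add[OF sa sb])
  from sums_group[OF this, of 2]
  have g: "(\<lambda>m. sum (\<lambda>n. a n + b n) {m*2..<m*2+2}) sums (Cf S 0 + Cf S pi)" by simp
  have e: "sum (\<lambda>n. a n + b n) {m*2..<m*2+2} = (2 / 2^S) * a m" for m
  proof -
    have "{m*2..<m*2+2} = {2*m, Suc (2*m)}" by auto
    hence "sum (\<lambda>n. a n + b n) {m*2..<m*2+2} = (a (2*m) + b (2*m)) + (a (Suc (2*m)) + b (Suc (2*m)))"
      by simp
    also have "a (2*m) + b (2*m) = 0"
      unfolding a_def b_def cos_npi by (simp del: of_nat_Suc)
    also have "a (Suc (2*m)) + b (Suc (2*m)) = 2 / real (2 * Suc m)^S"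
      unfolding a_def b_def cos_npi by (simp del: of_nat_Suc)
    also have "real (2 * Suc m)^S = (2 * real (Suc m))^S" by (simp only: of_nat_mult of_nat_numeral)
    also have "\<dots> = 2^S * real (Suc m)^S" by (rule power_mult_distrib)
    finally show ?thesis by (simp add: a_def)
  qed
  have "(\<lambda>m. (2 / 2^S) * a m) sums ((2 / 2^S) * Cf S 0)" by (rule sums_mult[OF sa])
  with g e have "Cf S 0 + Cf S pi = (2 / 2^S) * Cf S 0" by (simp add: sums_iff)
  thus ?thesis by simp
qed

lemma deriv_zero_const: fixes h h' :: "real \<Rightarrow> real"
  assumes d: "\<And>x. (h has_field_derivative h' x) (at x)"
    and z: "\<And>x. 0 < x \<Longrightarrow> x < 2*pi \<Longrightarrow> h' x = 0"
    and th: "0 \<le> \<theta>" "\<theta> \<le> 2*pi"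
  shows "h \<theta> = h 0"
proof (cases "\<theta> = 0")
  case False
  hence "0 < \<theta>" using th by simp
  moreover have "continuous_on {0..\<theta>} h"
    using d by (intro continuous_at_imp_continuous_on ballI DERIV_isCont) auto
  moreover have "DERIV h x :> 0" if "0 < x" "x < \<theta>" for x
    using d[of x] z[of x] that th by simp
  ultimately show ?thesis by (intro DERIV_isconst_end) auto
qed simp

lemma ratpoly_0: "ratpoly 0" by (simp add: ratpoly_def)

lemma deriv_polyQ: "((\<lambda>\<theta>. pi^(Suc S) * poly (anti p) (\<theta>/pi)) has_field_derivative pi^S * poly p (\<theta>/pi)) (at \<theta>)"
proof -
  have "DERIV (\<lambda>\<theta>. \<theta>/pi) \<theta> :> 1/pi" by (auto intro!: derivative_eq_intros)
  from DERIV_chain2[OF poly_DERIV[of "anti p" "\<theta>/pi"] this]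
  have "DERIV (\<lambda>\<theta>. poly (anti p) (\<theta>/pi)) \<theta> :> poly p (\<theta>/pi) * (1/pi)" by (simp add: pderiv_anti)
  from DERIV_cmult[OF this, of "pi^(Suc S)"] show ?thesis by simp
qed

lemma main_poly: "2 \<le> S \<Longrightarrow> \<exists>p. ratpoly p \<and>
   (\<forall>\<theta>\<in>{0..2*pi}. (if even S then Cf S \<theta> else Sf S \<theta>) = pi^S * poly p (\<theta>/pi))"
proof (induction S rule: nat_induct_at_least)
  case base
  show ?case
  proof (intro exI conjI ballI)
    show "ratpoly [:1/6, -1/2, 1/4:]" by (intro ratpoly_pCons ratpoly_0) auto
    fix \<theta> :: real assume "\<theta> \<in> {0..2*pi}"
    hence "Cf 2 \<theta> = pi^2/6 - pi*\<theta>/2 + \<theta>^2/4" by (intro Cf2) auto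
    thus "(if even 2 then Cf 2 \<theta> else Sf 2 \<theta>) = pi^2 * poly [:1/6, -1/2, 1/4:] (\<theta>/pi)"
    proof -
      have "pi^2 * poly [:1/6, -1/2, 1/4:] (\<theta>/pi) = pi^2/6 - pi*\<theta>/2 + \<theta>^2/4"
        by (simp add: field_simps power2_eq_square)
      thus ?thesis using \<open>Cf 2 \<theta> = _\<close> by simp
    qed
  qed
next
  case (Suc S)
  from Suc.IH obtain p where p: "ratpoly p"
    "\<And>\<theta>. \<theta>\<in>{0..2*pi} \<Longrightarrow> (if even S then Cf S \<theta> else Sf S \<theta>) = pi^S * poly p (\<theta>/pi)" by blast
  define Q where "Q = anti p"
  have Q: "ratpoly Q" unfolding Q_def using p(1) by (rule ratpoly_anti)
  show ?case
  proof (cases "even S")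
    case True
    have "Sf (Suc S) \<theta> - pi^(Suc S) * poly Q (\<theta>/pi) = Sf (Suc S) 0 - pi^(Suc S) * poly Q (0/pi)"
      if "\<theta> \<in> {0..2*pi}" for \<theta>
    proof (rule deriv_zero_const[where h'="\<lambda>\<theta>. Cf S \<theta> - pi^S * poly p (\<theta>/pi)"])
      show "((\<lambda>\<theta>. Sf (Suc S) \<theta> - pi^(Suc S) * poly Q (\<theta>/pi)) has_field_derivative Cf S x - pi^S * poly p (x/pi)) (at x)" for x
        unfolding Q_def by (intro DERIV_diff Sf_deriv deriv_polyQ Suc.hyps)
      show "Cf S x - pi^S * poly p (x/pi) = 0" if "0 < x" "x < 2*pi" for x
        using p(2)[of x] that True by simp
    qed (use that in auto)
    moreover have "Sf (Suc S) 0 = 0" by (simp add: Sf_def)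
    ultimately show ?thesis using Q True by (intro exI[of _ Q]) (auto simp: Q_def anti_0)
  next
    case False
    have h: "Cf (Suc S) \<theta> + pi^(Suc S) * poly Q (\<theta>/pi) = Cf (Suc S) 0 + pi^(Suc S) * poly Q (0/pi)"
      if "\<theta> \<in> {0..2*pi}" for \<theta>
    proof (rule deriv_zero_const[where h'="\<lambda>\<theta>. - Sf S \<theta> + pi^S * poly p (\<theta>/pi)"])
      show "((\<lambda>\<theta>. Cf (Suc S) \<theta> + pi^(Suc S) * poly Q (\<theta>/pi)) has_field_derivative - Sf S x + pi^S * poly p (x/pi)) (at x)" for x
        unfolding Q_def by (intro DERIV_add Cf_deriv deriv_polyQ Suc.hyps)
      show "- Sf S x + pi^S * poly p (x/pi) = 0" if "0 < x" "x < 2*pi" for x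
        using p(2)[of x] that False by simp
    qed (use that in auto)
    have h': "Cf (Suc S) \<theta> = Cf (Suc S) 0 - pi^(Suc S) * poly Q (\<theta>/pi)" if "\<theta> \<in> {0..2*pi}" for \<theta>
      using h[OF that] by (simp add: Q_def anti_0)
    define Z where "Z = Cf (Suc S) 0"
    define c :: real where "c = 2 - 2 / 2^(Suc S)"
    have cpos: "c > 0"
    proof -
      have "(2::real) / 2^(Suc S) \<le> 2 / 2" by (intro divide_left_mono) auto
      hence "(2::real) / 2^(Suc S) \<le> 1" by simp
      thus ?thesis unfolding c_def by linarith
    qed
    have crat: "c \<in> \<rat>" by (simp add: c_def)
    have "Cf (Suc S) pi + Z = 2 * Z / 2^(Suc S)" unfolding Z_def by (rule Cf_pi) (use Suc.hyps in simp)
    moreover have "Cf (Suc S) pi = Z - pi^(Suc S) * poly Q 1" using h'[of pi] by (simp add: Z_def)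
    ultimately have "c * Z = pi^(Suc S) * poly Q 1" by (simp add: c_def algebra_simps)
    hence Zeq: "Z = pi^(Suc S) * (poly Q 1 / c)" using cpos by (simp add: field_simps)
    show ?thesis
    proof (intro exI[of _ "[:poly Q 1 / c:] - Q"] conjI ballI)
      show "ratpoly ([:poly Q 1 / c:] - Q)"
        by (intro ratpoly_diff ratpoly_const Q Rats_divide ratpoly_poly crat) auto
      fix \<theta> :: real assume "\<theta> \<in> {0..2*pi}"
      thus "(if even (Suc S) then Cf (Suc S) \<theta> else Sf (Suc S) \<theta>) = pi^(Suc S) * poly ([:poly Q 1 / c:] - Q) (\<theta>/pi)"
        using False h' Zeq by (simp add: Z_def algebra_simps)
    qed
  qed
qed

definition cellpoly :: "(real \<Rightarrow> real) \<Rightarrow> real \<Rightarrow> bool" where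
  "cellpoly f \<delta> \<longleftrightarrow> \<delta> > 0 \<and> (\<forall>j::int. \<exists>q. ratpoly q \<and> (\<forall>x\<in>{of_int j * \<delta> .. (of_int j + 1) * \<delta>}. f x = poly q x))"

definition PW :: "(real \<Rightarrow> real) \<Rightarrow> real \<Rightarrow> real \<Rightarrow> bool" where
  "PW f u v \<longleftrightarrow> (\<exists>xs :: real list. xs \<noteq> [] \<and> sorted xs \<and> hd xs = u \<and> last xs = v \<and>
           (\<forall>i < length xs - 1. \<exists>p :: real poly. (\<forall>j. coeff p j \<in> \<rat>) \<and>
              (\<forall>x \<in> {xs ! i .. xs ! Suc i}. f x = poly p x)))"

lemma PW_single: assumes "u \<le> v" "ratpoly q" "\<forall>x\<in>{u..v}. f x = poly q x" shows "PW f u v"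
  unfolding PW_def
proof (intro exI[of _ "[u, v]"] conjI allI impI)
  fix i assume "i < length [u, v] - 1"
  hence "i = 0" by simp
  thus "\<exists>p :: real poly. (\<forall>j. coeff p j \<in> \<rat>) \<and> (\<forall>x \<in> {[u,v] ! i .. [u,v] ! Suc i}. f x = poly p x)"
    using assms by (auto simp: ratpoly_def)
qed (use assms in auto)

lemma PW_cons: assumes "u \<le> w" "ratpoly q" "\<forall>x\<in>{u..w}. f x = poly q x" "PW f w v" shows "PW f u v"
proof -
  from assms(4) obtain xs where xs: "xs \<noteq> []" "sorted xs" "hd xs = w" "last xs = v"
     "\<forall>i < length xs - 1. \<exists>p :: real poly. (\<forall>j. coeff p j \<in> \<rat>) \<and> (\<forall>x \<in> {xs ! i .. xs ! Suc i}. f x = poly p x)"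
    unfolding PW_def by blast
  then obtain ys where ys: "xs = w # ys" by (cases xs) auto
  show ?thesis unfolding PW_def
  proof (intro exI[of _ "u # xs"] conjI allI impI)
    show "sorted (u # xs)" using xs(2) assms(1) unfolding ys by auto
    fix i assume i: "i < length (u # xs) - 1"
    show "\<exists>p :: real poly. (\<forall>j. coeff p j \<in> \<rat>) \<and> (\<forall>x \<in> {(u # xs) ! i .. (u # xs) ! Suc i}. f x = poly p x)"
    proof (cases i)
      case 0 thus ?thesis using assms ys by (auto simp: ratpoly_def)
    next
      case (Suc i') thus ?thesis using xs(5) i by auto
    qed
  qed (use xs in auto)
qed

lemma cellpoly_cell: assumes "cellpoly f \<delta>" "of_int j * \<delta> \<le> u" "u \<le> v" "v \<le> (of_int j + 1) * \<delta>"
  shows "PW f u v"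
proof -
  from assms(1) obtain q where "ratpoly q" "\<forall>x\<in>{of_int j * \<delta> .. (of_int j + 1) * \<delta>}. f x = poly q x"
    unfolding cellpoly_def by blast
  thus ?thesis using assms(2-4) by (intro PW_single[of u v q]) auto
qed

lemma cellpoly_PW: assumes c: "cellpoly f \<delta>" and that: "u \<le> v" shows "PW f u v"
proof -
  have d: "\<delta> > 0" using c by (simp add: cellpoly_def)
  have fl: "of_int \<lfloor>x/\<delta>\<rfloor> * \<delta> \<le> x" "x < (of_int \<lfloor>x/\<delta>\<rfloor> + 1) * \<delta>" for x
  proof -
    have a: "of_int \<lfloor>x/\<delta>\<rfloor> \<le> x/\<delta>" and b: "x/\<delta> < of_int \<lfloor>x/\<delta>\<rfloor> + 1" by linarith+
    from mult_right_mono[OF a, of \<delta>] d show "of_int \<lfloor>x/\<delta>\<rfloor> * \<delta> \<le> x" by simp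
    from mult_strict_right_mono[OF b d] d show "x < (of_int \<lfloor>x/\<delta>\<rfloor> + 1) * \<delta>" by simp
  qed
  have main: "\<forall>u v. u \<le> v \<longrightarrow> v \<le> (of_int \<lfloor>u/\<delta>\<rfloor> + 1 + real n) * \<delta> \<longrightarrow> PW f u v" for n
  proof (induction n)
    case 0 thus ?case using fl by (auto intro: cellpoly_cell[OF c])
  next
    case (Suc n)
    show ?case
    proof (intro allI impI)
      fix u v :: real assume uv: "u \<le> v" "v \<le> (of_int \<lfloor>u/\<delta>\<rfloor> + 1 + real (Suc n)) * \<delta>"
      show "PW f u v"
      proof (cases "v \<le> (of_int \<lfloor>u/\<delta>\<rfloor> + 1) * \<delta>")
        case True thus ?thesis using fl uv by (intro cellpoly_cell[OF c]) auto
      next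
        case False
        define w where "w = (of_int \<lfloor>u/\<delta>\<rfloor> + 1) * \<delta>"
        have fw: "\<lfloor>w/\<delta>\<rfloor> = \<lfloor>u/\<delta>\<rfloor> + 1"
        proof -
          have "w/\<delta> = of_int (\<lfloor>u/\<delta>\<rfloor> + 1)" using d by (simp add: w_def)
          thus ?thesis by simp
        qed
        have "PW f w v"
          using Suc.IH False uv(2) fw by (auto simp: w_def algebra_simps)
        moreover obtain q where q: "ratpoly q" "\<forall>x\<in>{of_int \<lfloor>u/\<delta>\<rfloor> * \<delta> .. (of_int \<lfloor>u/\<delta>\<rfloor> + 1) * \<delta>}. f x = poly q x"
          using c unfolding cellpoly_def by blast
        moreover have "u \<le> w" using fl[of u] by (simp add: w_def)
        ultimately show ?thesis
          using fl[of u] by (intro PW_cons[of u w q]) (auto simp: w_def)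
      qed
    qed
  qed
  define n where "n = nat (\<lceil>v/\<delta>\<rceil> - \<lfloor>u/\<delta>\<rfloor>)"
  have "v/\<delta> \<le> of_int \<lfloor>u/\<delta>\<rfloor> + 1 + real n" unfolding n_def by linarith
  hence "v \<le> (of_int \<lfloor>u/\<delta>\<rfloor> + 1 + real n) * \<delta>" using d by (simp add: field_simps)
  thus ?thesis using main that by blast
qed

lemma cellpoly_piecewise: "cellpoly f \<delta> \<Longrightarrow> piecewise_rat_poly f"
  using cellpoly_PW unfolding piecewise_rat_poly_def PW_def by blast

lemma cellpoly_refine: assumes c: "cellpoly f \<delta>" and N: "0 < N" shows "cellpoly f (\<delta> / real N)"
proof -
  have d: "\<delta> > 0" using c by (simp add: cellpoly_def)
  show ?thesis unfolding cellpoly_def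
  proof (intro conjI allI)
    show "\<delta> / real N > 0" using d N by simp
    fix j :: int
    define m where "m = j div int N"
    have i1: "m * int N \<le> j" and i2: "j + 1 \<le> (m + 1) * int N"
    proof -
      have "j = m * int N + j mod int N" by (simp add: m_def)
      moreover have "0 \<le> j mod int N" "j mod int N < int N" using N by auto
      ultimately show "m * int N \<le> j" "j + 1 \<le> (m + 1) * int N" by (simp_all add: algebra_simps)
    qed
    have r1: "of_int m * real N \<le> of_int j" and r2: "of_int j + 1 \<le> (of_int m + 1) * real N"
    proof -
      have "real_of_int (m * int N) \<le> real_of_int j" using i1 by (simp only: of_int_le_iff)
      thus "of_int m * real N \<le> of_int j" by simp
      have "real_of_int (j + 1) \<le> real_of_int ((m + 1) * int N)" using i2 by (simp only: of_int_le_iff)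
      thus "of_int j + 1 \<le> (of_int m + 1) * real N" by simp
    qed
    obtain q where q: "ratpoly q" "\<forall>x\<in>{of_int m * \<delta> .. (of_int m + 1) * \<delta>}. f x = poly q x"
      using c unfolding cellpoly_def by blast
    have sub1: "of_int m * \<delta> \<le> of_int j * (\<delta> / real N)"
    proof -
      have "of_int m * \<delta> = (of_int m * real N) * (\<delta> / real N)" using N by simp
      also have "\<dots> \<le> of_int j * (\<delta> / real N)" using r1 d N by (intro mult_right_mono) auto
      finally show ?thesis .
    qed
    have sub2: "(of_int j + 1) * (\<delta> / real N) \<le> (of_int m + 1) * \<delta>"
    proof -
      have "(of_int j + 1) * (\<delta> / real N) \<le> ((of_int m + 1) * real N) * (\<delta> / real N)"
        using r2 d N by (intro mult_right_mono) auto
      also have "\<dots> = (of_int m + 1) * \<delta>" using N by simp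
      finally show ?thesis .
    qed
    show "\<exists>q. ratpoly q \<and> (\<forall>x\<in>{of_int j * (\<delta> / real N) .. (of_int j + 1) * (\<delta> / real N)}. f x = poly q x)"
      using q sub1 sub2 by (intro exI[of _ q]) auto
  qed
qed

lemma cellpoly_add: "cellpoly f \<delta> \<Longrightarrow> cellpoly g \<delta> \<Longrightarrow> cellpoly (\<lambda>x. f x + g x) \<delta>"
  unfolding cellpoly_def
proof (intro conjI allI, simp)
  fix j :: int
  assume f: "0 < \<delta> \<and> (\<forall>j. \<exists>q. ratpoly q \<and> (\<forall>x\<in>{real_of_int j * \<delta>..(real_of_int j + 1) * \<delta>}. f x = poly q x))"
     and g: "0 < \<delta> \<and> (\<forall>j. \<exists>q. ratpoly q \<and> (\<forall>x\<in>{real_of_int j * \<delta>..(real_of_int j + 1) * \<delta>}. g x = poly q x))"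
  from f obtain q1 where q1: "ratpoly q1" "\<forall>x\<in>{real_of_int j * \<delta>..(real_of_int j + 1) * \<delta>}. f x = poly q1 x" by blast
  from g obtain q2 where q2: "ratpoly q2" "\<forall>x\<in>{real_of_int j * \<delta>..(real_of_int j + 1) * \<delta>}. g x = poly q2 x" by blast
  show "\<exists>q. ratpoly q \<and> (\<forall>x\<in>{real_of_int j * \<delta>..(real_of_int j + 1) * \<delta>}. f x + g x = poly q x)"
    using q1 q2 by (intro exI[of _ "q1 + q2"]) (auto intro: ratpoly_add)
qed

lemma cellpoly_cmult: "c \<in> \<rat> \<Longrightarrow> cellpoly f \<delta> \<Longrightarrow> cellpoly (\<lambda>x. c * f x) \<delta>"
  unfolding cellpoly_def
proof (intro conjI allI, simp)
  fix j :: int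
  assume c: "c \<in> \<rat>" and f: "0 < \<delta> \<and> (\<forall>j. \<exists>q. ratpoly q \<and> (\<forall>x\<in>{real_of_int j * \<delta>..(real_of_int j + 1) * \<delta>}. f x = poly q x))"
  from f obtain q1 where q1: "ratpoly q1" "\<forall>x\<in>{real_of_int j * \<delta>..(real_of_int j + 1) * \<delta>}. f x = poly q1 x" by blast
  show "\<exists>q. ratpoly q \<and> (\<forall>x\<in>{real_of_int j * \<delta>..(real_of_int j + 1) * \<delta>}. c * f x = poly q x)"
    using q1 c by (intro exI[of _ "smult c q1"]) (auto intro: ratpoly_smult)
qed

lemma cellpoly_const: "c \<in> \<rat> \<Longrightarrow> \<delta> > 0 \<Longrightarrow> cellpoly (\<lambda>x. c) \<delta>"
  unfolding cellpoly_def by (auto intro!: exI[of _ "[:c:]"] ratpoly_const)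

definition T :: "nat \<Rightarrow> real \<Rightarrow> real" where "T S \<theta> = (if even S then Cf S \<theta> else Sf S \<theta>)"

lemma T_period: "T S (\<theta> + 2 * pi * of_int m) = T S \<theta>"
proof -
  have e: "real (Suc n) * (\<theta> + 2 * pi * of_int m) = real (Suc n) * \<theta> + (2 * pi) * of_int (int (Suc n) * m)" for n
    by (simp add: algebra_simps)
  have c: "cos (real (Suc n) * (\<theta> + 2 * pi * of_int m)) = cos (real (Suc n) * \<theta>)" for n
    unfolding e by (simp only: cos_add cos_int_2pin sin_int_2pin mult_1_right mult_zero_right diff_zero)
  have s: "sin (real (Suc n) * (\<theta> + 2 * pi * of_int m)) = sin (real (Suc n) * \<theta>)" for n
    unfolding e by (simp only: sin_add cos_int_2pin sin_int_2pin mult_1_right mult_zero_right add_0_right)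
  show ?thesis unfolding T_def Cf_def Sf_def c s ..
qed

lemma G_cell: assumes "2 \<le> S"
  shows "\<exists>q. ratpoly q \<and> (\<forall>u\<in>{2 * of_int m..2 * of_int m+2}. T S (pi * u) = pi^S * poly q u)"
proof -
  obtain p where p: "ratpoly p" "\<forall>\<theta>\<in>{0..2 * pi}. T S \<theta> = pi^S * poly p (\<theta>/pi)"
    using main_poly[OF assms] unfolding T_def by blast
  show ?thesis
  proof (intro exI[of _ "pcompose p [:-2 * of_int m, 1:]"] conjI ballI)
    show "ratpoly (pcompose p [:-2 * of_int m, 1:])"
      by (intro ratpoly_pcompose p ratpoly_pCons ratpoly_const) auto
    fix u :: real assume u: "u \<in> {2 * of_int m..2 * of_int m+2}"
    define \<theta> where "\<theta> = pi * u - 2 * pi * of_int m"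
    have u1: "pi * (2 * of_int m) \<le> pi * u" using u by (intro mult_left_mono) auto
    have u2: "pi * u \<le> pi * (2 * of_int m + 2)" using u by (intro mult_left_mono) auto
    have th: "\<theta> \<in> {0..2 * pi}" using u1 u2 unfolding \<theta>_def by (simp add: algebra_simps)
    have "T S (pi * u) = T S (\<theta> + 2 * pi * of_int m)" by (simp add: \<theta>_def)
    also have "\<dots> = T S \<theta>" by (rule T_period)
    also have "\<dots> = pi^S * poly p (\<theta>/pi)" using p th by blast
    also have "\<theta>/pi = u - 2 * of_int m" by (simp add: \<theta>_def field_simps)
    finally show "T S (pi * u) = pi^S * poly (pcompose p [:-2 * of_int m, 1:]) u"
      by (simp add: poly_pcompose)
  qed
qed

lemma term_cell: assumes S: "2 \<le> S"
  shows "cellpoly (\<lambda>\<tau>. T S (pi * (of_int k * \<tau>)) / pi^S) (2 / real (nat (max 1 \<bar>k\<bar>)))"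
proof (cases "k = 0")
  case True
  obtain q where q: "ratpoly q" "\<forall>u\<in>{2 * of_int 0..2 * of_int 0 + 2}. T S (pi * u) = pi^S * poly q u"
    using G_cell[OF S, of 0] by blast
  have "T S (pi * 0) = pi^S * poly q 0" using q(2)[rule_format, of 0] by simp
  hence e: "(\<lambda>\<tau>. T S (pi * (of_int k * \<tau>)) / pi^S) = (\<lambda>\<tau>. poly q 0)" using True by auto
  show ?thesis unfolding e using True by (intro cellpoly_const ratpoly_poly q) auto
next
  case False
  have kk: "real (nat (max 1 \<bar>k\<bar>)) = \<bar>of_int k\<bar>" using False by auto
  have ak: "\<bar>of_int k\<bar> > (0::real)" using False by auto
  show ?thesis unfolding cellpoly_def kk
  proof (intro conjI allI)
    show "2 / \<bar>real_of_int k\<bar> > 0" using ak by simp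
    fix j :: int
    define m where "m = (if k > 0 then j else - j - 1)"
    obtain q where q: "ratpoly q" "\<forall>u\<in>{2 * of_int m..2 * of_int m + 2}. T S (pi * u) = pi^S * poly q u"
      using G_cell[OF S, of m] by blast
    show "\<exists>q. ratpoly q \<and> (\<forall>x\<in>{of_int j * (2 / \<bar>real_of_int k\<bar>)..(of_int j + 1) * (2 / \<bar>real_of_int k\<bar>)}.
             T S (pi * (of_int k * x)) / pi^S = poly q x)"
    proof (intro exI[of _ "pcompose q [:0, of_int k:]"] conjI ballI)
      show "ratpoly (pcompose q [:0, of_int k:])" by (intro ratpoly_pcompose q ratpoly_pCons ratpoly_const) auto
      fix x assume x: "x \<in> {of_int j * (2 / \<bar>real_of_int k\<bar>)..(of_int j + 1) * (2 / \<bar>real_of_int k\<bar>)}"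
      have "of_int k * x \<in> {2 * of_int m..2 * of_int m + 2}"
      proof (cases "k > 0")
        case True
        hence a: "\<bar>real_of_int k\<bar> = of_int k" by simp
        have "of_int k * (of_int j * (2 / \<bar>real_of_int k\<bar>)) \<le> of_int k * x"
          using x True by (intro mult_left_mono) auto
        moreover have "of_int k * x \<le> of_int k * ((of_int j + 1) * (2 / \<bar>real_of_int k\<bar>))"
          using x True by (intro mult_left_mono) auto
        moreover have "of_int k * (of_int j * (2 / \<bar>real_of_int k\<bar>)) = 2 * of_int j" using True unfolding a by simp
        moreover have "of_int k * ((of_int j + 1) * (2 / \<bar>real_of_int k\<bar>)) = 2 * of_int j + 2" using True unfolding a
          by (simp add: field_simps)
        ultimately show ?thesis using True unfolding m_def by simp
      next
        case False
        hence kn: "k < 0" using \<open>k \<noteq> 0\<close> by simp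
        hence a: "\<bar>real_of_int k\<bar> = - of_int k" by simp
        have "of_int k * x \<le> of_int k * (of_int j * (2 / \<bar>real_of_int k\<bar>))"
          using x kn by (intro mult_left_mono_neg) auto
        moreover have "of_int k * ((of_int j + 1) * (2 / \<bar>real_of_int k\<bar>)) \<le> of_int k * x"
          using x kn by (intro mult_left_mono_neg) auto
        moreover have "of_int k * (of_int j * (2 / \<bar>real_of_int k\<bar>)) = 2 * of_int (- j - 1) + 2" using kn unfolding a by simp
        moreover have "of_int k * ((of_int j + 1) * (2 / \<bar>real_of_int k\<bar>)) = 2 * of_int (- j - 1)" using kn unfolding a
          by (simp add: field_simps)
        ultimately show ?thesis using kn unfolding m_def by simp
      qed
      hence "T S (pi * (of_int k * x)) = pi^S * poly q (of_int k * x)" using q(2) by blast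
      thus "T S (pi * (of_int k * x)) / pi^S = poly (pcompose q [:0, of_int k:]) x"
        by (simp add: poly_pcompose mult.commute)
    qed
  qed
qed

definition ratlist :: "(real \<times> int) list \<Rightarrow> bool" where "ratlist L \<longleftrightarrow> (\<forall>(c,k)\<in>set L. c \<in> \<rat>)"

definition fL :: "nat \<Rightarrow> (real \<times> int) list \<Rightarrow> real \<Rightarrow> real" where
  "fL S L \<tau> = (\<Sum>(c,k)\<leftarrow>L. c * (T S (pi * (of_int k * \<tau>)) / pi^S))"

definition Mprod :: "(real \<times> int) list \<Rightarrow> nat" where
  "Mprod L = prod_list (map (\<lambda>(c,k). nat (max 1 \<bar>k\<bar>)) L)"

lemma Mprod_pos: "Mprod L > 0"
  by (induction L) (auto simp: Mprod_def)

lemma fL_cell: assumes S: "2 \<le> S" shows "ratlist L \<Longrightarrow> cellpoly (fL S L) (2 / real (Mprod L))"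
proof (induction L)
  case Nil
  have "fL S [] = (\<lambda>x. 0)" by (simp add: fL_def[abs_def])
  thus ?case by (simp add: Mprod_def cellpoly_const)
next
  case (Cons a L)
  obtain c k where a: "a = (c, k)" by (cases a)
  have c: "c \<in> \<rat>" and rl: "ratlist L" using Cons.prems by (auto simp: ratlist_def a)
  define mk where "mk = nat (max 1 \<bar>k\<bar>)"
  have mk: "mk > 0" by (simp add: mk_def)
  have Mprod: "Mprod (a # L) = mk * Mprod L" by (simp add: Mprod_def a mk_def)
  have f: "fL S (a # L) = (\<lambda>\<tau>. c * (T S (pi * (of_int k * \<tau>)) / pi^S) + fL S L \<tau>)"
    by (simp add: fL_def[abs_def] a)
  have d1: "2 / real mk / real (Mprod L) = 2 / real (Mprod (a # L))" by (simp add: Mprod)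
  have d2: "2 / real (Mprod L) / real mk = 2 / real (Mprod (a # L))" by (simp add: Mprod)
  have t1: "cellpoly (\<lambda>\<tau>. c * (T S (pi * (of_int k * \<tau>)) / pi^S)) (2 / real (Mprod (a # L)))"
    unfolding d1[symmetric] mk_def
    by (intro cellpoly_cmult c cellpoly_refine term_cell S Mprod_pos)
  have t2: "cellpoly (fL S L) (2 / real (Mprod (a # L)))"
    unfolding d2[symmetric] by (intro cellpoly_refine Cons.IH rl mk)
  show ?case unfolding f by (rule cellpoly_add[OF t1 t2])
qed

definition tr :: "bool \<Rightarrow> real \<Rightarrow> real" where "tr E y = (if E then cos y else sin y)"

definition trL :: "bool \<Rightarrow> (real \<times> int) list \<Rightarrow> real \<Rightarrow> real" where
  "trL E L x = (\<Sum>(c,k)\<leftarrow>L. c * tr E (of_int k * x))"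

definition mulc :: "(real \<times> int) list \<Rightarrow> (real \<times> int) list" where
  "mulc L = concat (map (\<lambda>(c,k). [(c/2, k+1), (c/2, k-1)]) L)"
definition muls :: "(real \<times> int) list \<Rightarrow> (real \<times> int) list" where
  "muls L = concat (map (\<lambda>(c,k). [(c/2, k+1), (-c/2, k-1)]) L)"
definition mulss :: "(real \<times> int) list \<Rightarrow> (real \<times> int) list" where
  "mulss L = concat (map (\<lambda>(c,k). [(c/2, k-1), (-c/2, k+1)]) L)"

lemma of_int_pm: "of_int (k+1) * x = of_int k * x + x" "of_int (k-1) * x = of_int k * x - x"
  by (simp_all add: algebra_simps)

lemma cos_trL: "cos x * trL E L x = trL E (mulc L) x"
proof (induction L)
  case Nil thus ?case by (simp add: trL_def mulc_def)
next
  case (Cons a L)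
  obtain c k where a: "a = (c,k)" by (cases a)
  have "cos x * (c * tr E (of_int k * x)) = c/2 * tr E (of_int (k+1) * x) + c/2 * tr E (of_int (k-1) * x)"
    unfolding of_int_pm tr_def by (cases E) (simp_all add: cos_add cos_diff sin_add sin_diff field_simps)
  with Cons show ?case by (simp add: trL_def mulc_def a algebra_simps)
qed

lemma sin_trL_c: "sin x * trL True L x = trL False (muls L) x"
proof (induction L)
  case Nil thus ?case by (simp add: trL_def muls_def)
next
  case (Cons a L)
  obtain c k where a: "a = (c,k)" by (cases a)
  have "sin x * (c * tr True (of_int k * x)) = c/2 * tr False (of_int (k+1) * x) + -c/2 * tr False (of_int (k-1) * x)"
    unfolding of_int_pm tr_def by (simp add: sin_add sin_diff field_simps)
  with Cons show ?case by (simp add: trL_def muls_def a algebra_simps)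
qed

lemma sin_trL_s: "sin x * trL False L x = trL True (mulss L) x"
proof (induction L)
  case Nil thus ?case by (simp add: trL_def mulss_def)
next
  case (Cons a L)
  obtain c k where a: "a = (c,k)" by (cases a)
  have "sin x * (c * tr False (of_int k * x)) = c/2 * tr True (of_int (k-1) * x) + -c/2 * tr True (of_int (k+1) * x)"
    unfolding of_int_pm tr_def by (simp add: cos_add cos_diff field_simps)
  with Cons show ?case by (simp add: trL_def mulss_def a algebra_simps)
qed

lemma half_rat: "(a::real) * 2 \<in> \<rat> \<Longrightarrow> a \<in> \<rat>"
  using Rats_divide[of "a * 2" 2] by simp

lemma ratlist_mulc: "ratlist L \<Longrightarrow> ratlist (mulc L)"
  by (auto simp: ratlist_def mulc_def intro: half_rat)
lemma ratlist_muls: "ratlist L \<Longrightarrow> ratlist (muls L)"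
  by (auto simp: ratlist_def muls_def intro: half_rat)
lemma ratlist_mulss: "ratlist L \<Longrightarrow> ratlist (mulss L)"
  by (auto simp: ratlist_def mulss_def intro: half_rat)

lemma expand: "\<exists>L. ratlist L \<and> (\<forall>x. cos x ^ A * sin x ^ B = trL (even B) L x)"
proof (induction B)
  case 0
  show ?case
  proof (induction A)
    case 0
    show ?case by (intro exI[of _ "[(1,0)]"]) (simp add: ratlist_def trL_def tr_def)
  next
    case (Suc A)
    then obtain L where L: "ratlist L" "\<forall>x. cos x ^ A * sin x ^ 0 = trL (even (0::nat)) L x" by blast
    show ?case
    proof (intro exI[of _ "mulc L"] conjI allI)
      show "ratlist (mulc L)" using L(1) by (rule ratlist_mulc)
      fix x :: real
      have "cos x ^ Suc A * sin x ^ 0 = cos x * (cos x ^ A * sin x ^ 0)" by simp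
      also have "\<dots> = trL (even (0::nat)) (mulc L) x" using L(2) cos_trL by simp
      finally show "cos x ^ Suc A * sin x ^ 0 = trL (even (0::nat)) (mulc L) x" .
    qed
  qed
next
  case (Suc B)
  then obtain L where L: "ratlist L" "\<forall>x. cos x ^ A * sin x ^ B = trL (even B) L x" by blast
  show ?case
  proof (cases "even B")
    case True
    show ?thesis
    proof (intro exI[of _ "muls L"] conjI allI)
      show "ratlist (muls L)" using L(1) by (rule ratlist_muls)
      fix x :: real
      have "cos x ^ A * sin x ^ Suc B = sin x * (cos x ^ A * sin x ^ B)" by simp
      also have "\<dots> = trL (even (Suc B)) (muls L) x" using L(2) sin_trL_c True by simp
      finally show "cos x ^ A * sin x ^ Suc B = trL (even (Suc B)) (muls L) x" .
    qed
  next
    case False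
    show ?thesis
    proof (intro exI[of _ "mulss L"] conjI allI)
      show "ratlist (mulss L)" using L(1) by (rule ratlist_mulss)
      fix x :: real
      have "cos x ^ A * sin x ^ Suc B = sin x * (cos x ^ A * sin x ^ B)" by simp
      also have "\<dots> = trL (even (Suc B)) (mulss L) x" using L(2) sin_trL_s False by simp
      finally show "cos x ^ A * sin x ^ Suc B = trL (even (Suc B)) (mulss L) x" .
    qed
  qed
qed

lemma powi_recip: assumes "a \<le> 0" shows "(1 / (x::real)) powi a = x ^ nat (-a)"
proof (cases "a = 0")
  case False
  hence "\<not> a \<ge> 0" using assms by simp
  thus ?thesis by (simp add: power_int_def)
qed simp

lemma T_tr: "T S \<theta> = (\<Sum>m. tr (even S) (real (Suc m) * \<theta>) / real (Suc m)^S)"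
  by (simp add: T_def Cf_def Sf_def tr_def)

lemma summable_tr: assumes "2 \<le> S" shows "summable (\<lambda>m. tr E (real (Suc m) * \<theta>) / real (Suc m)^S)"
  by (rule summable_comparison_test[OF _ summable_inv_pow[OF assms]])
     (use bound_cos bound_sin in \<open>auto simp: tr_def\<close>)

lemma trL_Cons: "trL E ((c,k) # L) y = c * tr E (of_int k * y) + trL E L y"
  by (simp add: trL_def)

lemma psi_core: assumes S: "2 \<le> S"
  shows "(\<lambda>m. trL (even S) L (pi * real (Suc m) * \<tau>) / real (Suc m)^S) sums (\<Sum>(c,k)\<leftarrow>L. c * T S (pi * (of_int k * \<tau>)))"
proof (induction L)
  case Nil thus ?case by (simp add: trL_def)
next
  case (Cons a L)
  obtain c k where a: "a = (c,k)" by (cases a)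
  have "(\<lambda>m. tr (even S) (real (Suc m) * (pi * (of_int k * \<tau>))) / real (Suc m)^S) sums T S (pi * (of_int k * \<tau>))"
    unfolding T_tr by (rule summable_sums[OF summable_tr[OF S]])
  from sums_add[OF sums_mult[OF this, of c] Cons.IH]
  have "(\<lambda>m. c * (tr (even S) (real (Suc m) * (pi * (of_int k * \<tau>))) / real (Suc m)^S) +
          trL (even S) L (pi * real (Suc m) * \<tau>) / real (Suc m)^S) sums
        (c * T S (pi * (of_int k * \<tau>)) + (\<Sum>(c,k)\<leftarrow>L. c * T S (pi * (of_int k * \<tau>))))" .
  moreover have "(\<lambda>m. c * (tr (even S) (real (Suc m) * (pi * (of_int k * \<tau>))) / real (Suc m)^S) +
          trL (even S) L (pi * real (Suc m) * \<tau>) / real (Suc m)^S) =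
        (\<lambda>m. trL (even S) (a # L) (pi * real (Suc m) * \<tau>) / real (Suc m)^S)"
  proof
    fix m
    have e: "of_int k * (pi * real (Suc m) * \<tau>) = real (Suc m) * (pi * (of_int k * \<tau>))" by (simp add: algebra_simps)
    show "c * (tr (even S) (real (Suc m) * (pi * (of_int k * \<tau>))) / real (Suc m)^S) +
          trL (even S) L (pi * real (Suc m) * \<tau>) / real (Suc m)^S =
          trL (even S) (a # L) (pi * real (Suc m) * \<tau>) / real (Suc m)^S"
      unfolding a trL_Cons e by (simp add: add_divide_distrib)
  qed
  ultimately show ?case by (simp add: a)
qed

lemma fL_mult: "(\<Sum>(c,k)\<leftarrow>L. c * T S (pi * (of_int k * \<tau>))) = pi^S * fL S L \<tau>"
  by (induction L) (auto simp: fL_def algebra_simps)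

theorem lemma4:
  fixes a b s :: int
  assumes "a \<le> 0" and "b \<le> 0" and "s > 1" and "even (s - b)"
  shows "\<exists>f :: real \<Rightarrow> real. piecewise_rat_poly f \<and>
           (\<forall>\<tau> :: real. psi a b s \<tau> = pi powi s * f \<tau>)"
proof -
  define A B S where "A = nat (-a)" and "B = nat (-b)" and "S = nat s"
  have sS: "s = int S" using assms(3) by (simp add: S_def)
  have S2: "2 \<le> S" using assms(3) by (simp add: S_def)
  have bB: "b = - int B" using assms(2) by (simp add: B_def)
  have par: "even B = even S"
  proof -
    have "s - b = int (S + B)" using sS bB by simp
    hence "even (S + B)" using assms(4) by (metis even_of_nat)
    thus ?thesis by auto
  qed
  obtain L where L: "ratlist L" "\<forall>x. cos x ^ A * sin x ^ B = trL (even B) L x"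
    using expand[of A B] by blast
  show ?thesis
  proof (intro exI[of _ "fL S L"] conjI allI)
    show "piecewise_rat_poly (fL S L)" by (rule cellpoly_piecewise[OF fL_cell[OF S2 L(1)]])
    fix \<tau> :: real
    have sec: "sec y powi a = cos y ^ A" for y unfolding sec_def A_def by (rule powi_recip[OF assms(1)])
    have csc: "csc y powi b = sin y ^ B" for y unfolding csc_def B_def by (rule powi_recip[OF assms(2)])
    have "psi a b s \<tau> = (\<Sum>m. trL (even S) L (pi * real (Suc m) * \<tau>) / real (Suc m)^S)"
      unfolding psi_def Let_def sec csc sS power_int_of_nat L(2)[rule_format] par ..
    also have "\<dots> = (\<Sum>(c,k)\<leftarrow>L. c * T S (pi * (of_int k * \<tau>)))"
      by (rule sums_unique[symmetric, OF psi_core[OF S2]])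
    also have "\<dots> = pi powi s * fL S L \<tau>" unfolding fL_mult sS by simp
    finally show "psi a b s \<tau> = pi powi s * fL S L \<tau>" .
  qed
qed

end
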